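(* Let $G=(V,E,T,c)$ be a $k$-terminal network and let $S\subset T$ with $S\neq\emptyset,T$. Then for every connected component $C\in CC(E_S)$, the boundary $\delta(C)$ is the minimum cutset separating the terminals $T\cap C$ from $T\setminus C$, i.e. $\delta(C)=E_{T\cap C}$.
   Context: A $k$-terminal network $G=(V,E,T,c)$ is a finite connected undirected graph $(V,E)$ with edge weights (capacities) $c:E\to\mathbb{R}_{>0}$ and a set $T\subseteq V$ of $|T|=k$ terminals. For $F\subseteq E$ let $c(F)=\sum_{e\in F}c(e)$; for $W\subseteq V$ let $\delta(W)$ be the set of edges with exactly one endpoint in $W$. For $S\subset T$ with $S\neq\emptyset,T$, write $\bar S=T\setminus S$; a cut $(W,V\setminus W)$ is $S$-separating if $W\cap T\in\{S,\bar S\}$, and $\mathrm{mincut}_G(S)$ is the minimum of $c(\delta(W))$ over all $S$-separating cuts. It is assumed (e.g. by a generic perturbation of the weights) that the minimizing cutset is unique; it is denoted $E_S$ (so $E_S=E_{\bar S}$). For $F\subseteq E$, $CC(F)$ denotes the set of vertex sets of connected components of $(V,E\setminus F)$. (Each component of $CC(E_S)$ contains at least one terminal and $|CC(E_S)|\ge 2$, so $T\cap C$ is a nonempty proper subset of $T$.) *)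

theory Defs
  imports Complex_Main
begin

text \<open>An undirected (multi)graph is given by a vertex set V, an edge set E and an
endpoint map ends: each edge has one (loop) or two endpoints in V.\<close>

definition cap :: "('e \<Rightarrow> real) \<Rightarrow> 'e set \<Rightarrow> real" where
  "cap c F = (\<Sum>e\<in>F. c e)"

definition delta :: "'e set \<Rightarrow> ('e \<Rightarrow> 'a set) \<Rightarrow> 'a set \<Rightarrow> 'e set" where
  "delta E ends W = {e\<in>E. \<exists>u\<in>ends e. \<exists>v\<in>ends e. u \<in> W \<and> v \<notin> W}"

definition adj :: "'e set \<Rightarrow> ('e \<Rightarrow> 'a set) \<Rightarrow> 'e set \<Rightarrow> ('a \<times> 'a) set" where
  "adj E ends F = {(u,v). \<exists>e\<in>E - F. u \<in> ends e \<and> v \<in> ends e}"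

definition connected_graph :: "'a set \<Rightarrow> 'e set \<Rightarrow> ('e \<Rightarrow> 'a set) \<Rightarrow> bool" where
  "connected_graph V E ends = (\<forall>u\<in>V. \<forall>v\<in>V. (u,v) \<in> (adj E ends {})\<^sup>*)"

definition CC :: "'a set \<Rightarrow> 'e set \<Rightarrow> ('e \<Rightarrow> 'a set) \<Rightarrow> 'e set \<Rightarrow> 'a set set" where
  "CC V E ends F = (\<lambda>v. {u. (v,u) \<in> (adj E ends F)\<^sup>*}) ` V"

definition kterminal_network ::
  "'a set \<Rightarrow> 'e set \<Rightarrow> ('e \<Rightarrow> 'a set) \<Rightarrow> 'a set \<Rightarrow> ('e \<Rightarrow> real) \<Rightarrow> nat \<Rightarrow> bool" where
  "kterminal_network V E ends T c k \<longleftrightarrow>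
     finite V \<and> finite E \<and>
     (\<forall>e\<in>E. ends e \<subseteq> V \<and> ends e \<noteq> {} \<and> card (ends e) \<le> 2) \<and>
     connected_graph V E ends \<and>
     (\<forall>e\<in>E. c e > 0) \<and>
     T \<subseteq> V \<and> card T = k"

definition separating :: "'a set \<Rightarrow> 'a set \<Rightarrow> 'a set \<Rightarrow> 'a set \<Rightarrow> bool" where
  "separating V T S W \<longleftrightarrow> W \<subseteq> V \<and> (W \<inter> T = S \<or> W \<inter> T = T - S)"

definition mincut :: "'a set \<Rightarrow> 'e set \<Rightarrow> ('e \<Rightarrow> 'a set) \<Rightarrow> 'a set \<Rightarrow> ('e \<Rightarrow> real) \<Rightarrow> 'a set \<Rightarrow> real" where
  "mincut V E ends T c S = Min ((\<lambda>W. cap c (delta E ends W)) ` {W. separating V T S W})"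

definition is_min_cutset ::
  "'a set \<Rightarrow> 'e set \<Rightarrow> ('e \<Rightarrow> 'a set) \<Rightarrow> 'a set \<Rightarrow> ('e \<Rightarrow> real) \<Rightarrow> 'a set \<Rightarrow> 'e set \<Rightarrow> bool" where
  "is_min_cutset V E ends T c S F \<longleftrightarrow>
     (\<exists>W. separating V T S W \<and> F = delta E ends W \<and> cap c F = mincut V E ends T c S)"

definition unique_mincuts ::
  "'a set \<Rightarrow> 'e set \<Rightarrow> ('e \<Rightarrow> 'a set) \<Rightarrow> 'a set \<Rightarrow> ('e \<Rightarrow> real) \<Rightarrow> bool" where
  "unique_mincuts V E ends T c \<longleftrightarrow>
     (\<forall>S. S \<subseteq> T \<and> S \<noteq> {} \<and> S \<noteq> T \<longrightarrow> (\<exists>!F. is_min_cutset V E ends T c S F))"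

definition E_S ::
  "'a set \<Rightarrow> 'e set \<Rightarrow> ('e \<Rightarrow> 'a set) \<Rightarrow> 'a set \<Rightarrow> ('e \<Rightarrow> real) \<Rightarrow> 'a set \<Rightarrow> 'e set" where
  "E_S V E ends T c S = (THE F. is_min_cutset V E ends T c S F)"

end

theory Submission
  imports Defs
begin

lemma delta_compl:
  assumes "\<forall>e\<in>E. ends e \<subseteq> V" "X \<subseteq> V"
  shows "delta E ends (V - X) = delta E ends X"
  using assms unfolding delta_def by blast

lemma delta_Un: "delta E ends (A \<union> B) \<subseteq> delta E ends A \<union> delta E ends B"
  unfolding delta_def by blast

lemma delta_sub: "delta E ends A \<subseteq> E"
  unfolding delta_def by blast

lemma delta_fin: "finite E \<Longrightarrow> finite (delta E ends A)"
  using delta_sub finite_subset by metis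

lemma cap_union_le:
  assumes "finite E" "\<forall>e\<in>E. c e > 0" "A \<subseteq> E" "B \<subseteq> E"
  shows "cap c (A \<union> B) \<le> cap c A + cap c B"
proof -
  have fA: "finite A" "finite B" using assms by (auto intro: finite_subset)
  have "sum c (A \<inter> B) \<ge> 0" using assms by (intro sum_nonneg) (auto intro: less_imp_le)
  moreover have "sum c (A \<union> B) = sum c A + sum c B - sum c (A \<inter> B)"
    using sum_Un[OF fA] by simp
  ultimately show ?thesis unfolding cap_def by linarith
qed

lemma cap_mono:
  assumes "finite E" "\<forall>e\<in>E. c e > 0" "A \<subseteq> B" "B \<subseteq> E"
  shows "cap c A \<le> cap c B"
  unfolding cap_def using assms
  by (intro sum_mono2) (auto intro: finite_subset less_imp_le)

theorem lemma2p3: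
  fixes V :: "'a set" and E :: "'e set" and ends :: "'e \<Rightarrow> 'a set"
    and T :: "'a set" and c :: "'e \<Rightarrow> real" and k :: nat and S C :: "'a set"
  assumes "kterminal_network V E ends T c k"
    and "unique_mincuts V E ends T c"
    and "S \<subseteq> T" and "S \<noteq> {}" and "S \<noteq> T"
    and "C \<in> CC V E ends (E_S V E ends T c S)"
  shows "delta E ends C = E_S V E ends T c (T \<inter> C)"
proof -
  from assms(1) have finV: "finite V" and finE: "finite E"
    and endsV: "\<forall>e\<in>E. ends e \<subseteq> V" and card2: "\<forall>e\<in>E. card (ends e) \<le> 2"
    and conn: "connected_graph V E ends" and cpos: "\<forall>e\<in>E. c e > 0" and TV: "T \<subseteq> V"
    unfolding kterminal_network_def by auto
  define F where "F = E_S V E ends T c S"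
  have "\<exists>!F. is_min_cutset V E ends T c S F" using assms(2-5) unfolding unique_mincuts_def by blast
  hence "is_min_cutset V E ends T c S F" unfolding F_def E_S_def by (rule theI')
  then obtain W0 where W0: "separating V T S W0" "F = delta E ends W0"
     "cap c F = mincut V E ends T c S" unfolding is_min_cutset_def by blast
  have finsep: "\<And>S'. finite {W. separating V T S' W}"
    by (rule finite_subset[of _ "Pow V"]) (auto simp: separating_def finV)
  have minle: "\<And>S' W'. separating V T S' W' \<Longrightarrow> mincut V E ends T c S' \<le> cap c (delta E ends W')"
    unfolding mincut_def by (rule Min_le) (use finsep in auto)
  define R where "R = adj E ends F"
  obtain v0 where v0: "v0 \<in> V" "C = {u. (v0,u) \<in> R\<^sup>*}"
    using assms(6) unfolding CC_def R_def F_def by blast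
  define W where "W = (if v0 \<in> W0 then W0 else V - W0)"
  have sepW: "separating V T S W"
  proof (cases "v0 \<in> W0")
    case True then show ?thesis using W0 by (simp add: W_def)
  next
    case False
    have "(V - W0) \<inter> T = T - W0 \<inter> T" using TV by blast
    moreover have "T - (T - S) = S" using assms(3) by blast
    ultimately show ?thesis using W0(1) False unfolding W_def separating_def by auto
  qed
  have W0V: "W0 \<subseteq> V" using W0(1) unfolding separating_def by blast
  have dW: "delta E ends W = F"
    using W0(2) delta_compl[OF endsV W0V] unfolding W_def by simp
  have WV: "W \<subseteq> V" using sepW unfolding separating_def by blast
  have v0W: "v0 \<in> W" using v0 by (auto simp: W_def)
  have CW: "C \<subseteq> W"
  proof
    fix u assume "u \<in> C"
    hence "(v0,u) \<in> R\<^sup>*" using v0 by simp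
    thus "u \<in> W"
    proof (induction rule: rtrancl_induct)
      case base then show ?case using v0W .
    next
      case (step y z)
      then obtain e where e: "e \<in> E" "e \<notin> F" "y \<in> ends e" "z \<in> ends e"
        unfolding R_def adj_def by blast
      show ?case
      proof (rule ccontr)
        assume "z \<notin> W"
        hence "e \<in> delta E ends W" using e step(3) unfolding delta_def by blast
        thus False using dW e by blast
      qed
    qed
  qed
  have closed: "\<And>u e w. u \<in> C \<Longrightarrow> e \<in> E \<Longrightarrow> e \<notin> F \<Longrightarrow> u \<in> ends e \<Longrightarrow> w \<in> ends e \<Longrightarrow> w \<in> C"
  proof -
    fix u e w assume "u \<in> C" "e \<in> E" "e \<notin> F" "u \<in> ends e" "w \<in> ends e"
    hence "(u,w) \<in> R" unfolding R_def adj_def by blast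
    with \<open>u \<in> C\<close> show "w \<in> C" using v0 by (auto intro: rtrancl_into_rtrancl)
  qed
  have CV: "C \<subseteq> V" using CW WV by blast
  have dC_F: "delta E ends C \<subseteq> F"
  proof
    fix e assume e: "e \<in> delta E ends C"
    then obtain u w where "e \<in> E" "u \<in> ends e" "w \<in> ends e" "u \<in> C" "w \<notin> C"
      unfolding delta_def by blast
    thus "e \<in> F" using closed by blast
  qed
  have dC_sub: "delta E ends C \<subseteq> delta E ends W"
  proof
    fix e assume e: "e \<in> delta E ends C"
    hence eF: "e \<in> F" using dC_F by blast
    hence "e \<in> delta E ends W" using dW by simp
    thus "e \<in> delta E ends W" .
  qed
  have dWC_sub: "delta E ends (W - C) \<subseteq> delta E ends W"
  proof
    fix e assume e: "e \<in> delta E ends (W - C)"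
    then obtain u w where uw: "e \<in> E" "u \<in> ends e" "w \<in> ends e" "u \<in> W - C" "w \<notin> W - C"
      unfolding delta_def by blast
    show "e \<in> delta E ends W"
    proof (cases "w \<in> C")
      case True
      hence "e \<in> delta E ends C" using uw unfolding delta_def by blast
      thus ?thesis using dC_sub by blast
    next
      case False thus ?thesis using uw unfolding delta_def by blast
    qed
  qed
  have disj: "delta E ends C \<inter> delta E ends (W - C) = {}"
  proof (rule ccontr)
    assume "delta E ends C \<inter> delta E ends (W - C) \<noteq> {}"
    then obtain e where e1: "e \<in> delta E ends C" and e2: "e \<in> delta E ends (W - C)" by blast
    then obtain a b where ab: "e \<in> E" "a \<in> ends e" "a \<in> C" "b \<in> ends e" "b \<in> W - C"
      unfolding delta_def by blast
    have "a \<noteq> b" using ab by blast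
    hence "card {a,b} = 2" by simp
    moreover have "{a,b} \<subseteq> ends e" using ab by blast
    moreover have "finite (ends e)" using endsV ab finV finite_subset by blast
    ultimately have "ends e = {a,b}" using card2 ab(1)
      by (metis card_seteq)
    moreover have "a \<in> W" "b \<in> W" using ab CW by auto
    ultimately have "e \<notin> delta E ends W" unfolding delta_def by auto
    thus False using e1 dC_sub by blast
  qed
  have dW_eq: "delta E ends W = delta E ends C \<union> delta E ends (W - C)"
  proof (rule equalityI)
    show "delta E ends W \<subseteq> delta E ends C \<union> delta E ends (W - C)"
    proof
      fix e assume "e \<in> delta E ends W"
      then obtain u v where uv: "e \<in> E" "u \<in> ends e" "v \<in> ends e" "u \<in> W" "v \<notin> W"
        unfolding delta_def by blast
      have "v \<notin> C" "v \<notin> W - C" using uv CW by auto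
      thus "e \<in> delta E ends C \<union> delta E ends (W - C)"
        using uv unfolding delta_def by (cases "u \<in> C") auto
    qed
  qed (use dC_sub dWC_sub in blast)
  have capW: "cap c F = cap c (delta E ends C) + cap c (delta E ends (W - C))"
    unfolding dW[symmetric] dW_eq cap_def
    by (rule sum.union_disjoint) (use disj delta_fin[OF finE] in auto)
  have key: "\<And>X. X \<subseteq> V \<Longrightarrow> X \<inter> T = T \<inter> C \<Longrightarrow> cap c (delta E ends C) \<le> cap c (delta E ends X)"
  proof -
    fix X assume XV: "X \<subseteq> V" and XT: "X \<inter> T = T \<inter> C"
    define W' where "W' = (W - C) \<union> X"
    have "W' \<inter> T = W \<inter> T" using XT CW unfolding W'_def by blast
    moreover have "W' \<subseteq> V" using XV WV unfolding W'_def by blast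
    ultimately have "separating V T S W'" using sepW unfolding separating_def by simp
    hence "mincut V E ends T c S \<le> cap c (delta E ends W')" by (rule minle)
    hence "cap c F \<le> cap c (delta E ends W')" using W0(3) by linarith
    also have "\<dots> \<le> cap c (delta E ends (W - C) \<union> delta E ends X)"
      unfolding W'_def by (rule cap_mono[OF finE cpos delta_Un Un_least[OF delta_sub delta_sub]])
    also have "\<dots> \<le> cap c (delta E ends (W - C)) + cap c (delta E ends X)"
      by (rule cap_union_le[OF finE cpos delta_sub delta_sub])
    finally show "cap c (delta E ends C) \<le> cap c (delta E ends X)" using capW by simp
  qed
  have WT: "W \<inter> T \<noteq> T"
  proof
    assume "W \<inter> T = T"
    hence "T = S \<or> T = T - S" using sepW unfolding separating_def by auto
    thus False using assms(3-5) by blast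
  qed
  have TC_ne: "T \<inter> C \<noteq> {}"
  proof
    assume TC: "T \<inter> C = {}"
    have "cap c (delta E ends C) \<le> cap c (delta E ends {})" using key[of "{}"] TC by simp
    also have "delta E ends {} = {}" unfolding delta_def by blast
    finally have le0: "cap c (delta E ends C) \<le> 0" by (simp add: cap_def)
    have dCe: "delta E ends C = {}"
    proof (rule ccontr)
      assume ne: "delta E ends C \<noteq> {}"
      have "cap c (delta E ends C) > 0" unfolding cap_def
        by (rule sum_pos) (use ne delta_fin[OF finE] delta_sub[of E ends C] cpos in blast)+
      thus False using le0 by simp
    qed
    have "V \<subseteq> C"
    proof
      fix v assume "v \<in> V"
      hence "(v0,v) \<in> (adj E ends {})\<^sup>*" using conn v0 unfolding connected_graph_def by blast
      thus "v \<in> C"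
      proof (induction rule: rtrancl_induct)
        case base then show ?case using v0 by simp
      next
        case (step y z)
        then obtain e where e: "e \<in> E" "y \<in> ends e" "z \<in> ends e"
          unfolding adj_def by blast
        show ?case
        proof (rule ccontr)
          assume "z \<notin> C"
          hence "e \<in> delta E ends C" using e step(3) unfolding delta_def by blast
          thus False using dCe by blast
        qed
      qed
    qed
    hence "W \<inter> T = T" using CW TV by blast
    thus False using WT by blast
  qed
  have TC_nT: "T \<inter> C \<noteq> T" using CW WT by blast
  have mc: "is_min_cutset V E ends T c (T \<inter> C) (delta E ends C)"
    unfolding is_min_cutset_def
  proof (intro exI conjI)
    show sepC: "separating V T (T \<inter> C) C" using CV unfolding separating_def by blast
    show "delta E ends C = delta E ends C" ..
    show "cap c (delta E ends C) = mincut V E ends T c (T \<inter> C)"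
      unfolding mincut_def
    proof (rule Min_eqI[symmetric])
      show "finite ((\<lambda>W. cap c (delta E ends W)) ` {W. separating V T (T \<inter> C) W})"
        using finsep by simp
      show "cap c (delta E ends C) \<in> (\<lambda>W. cap c (delta E ends W)) ` {W. separating V T (T \<inter> C) W}"
        using sepC by blast
    next
      fix y assume "y \<in> (\<lambda>W. cap c (delta E ends W)) ` {W. separating V T (T \<inter> C) W}"
      then obtain X where X: "separating V T (T \<inter> C) X" "y = cap c (delta E ends X)" by blast
      hence XV: "X \<subseteq> V" unfolding separating_def by blast
      show "cap c (delta E ends C) \<le> y"
      proof (cases "X \<inter> T = T \<inter> C")
        case True thus ?thesis using key XV X by simp
      next
        case False
        hence "X \<inter> T = T - T \<inter> C" using X unfolding separating_def by blast
        hence "(V - X) \<inter> T = T \<inter> C" using TV by blast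
        hence "cap c (delta E ends C) \<le> cap c (delta E ends (V - X))" using key[of "V - X"] by blast
        thus ?thesis using X delta_compl[OF endsV XV] by simp
      qed
    qed
  qed
  have "\<exists>!F. is_min_cutset V E ends T c (T \<inter> C) F"
  proof -
    have "T \<inter> C \<subseteq> T" by blast
    thus ?thesis using assms(2) TC_ne TC_nT unfolding unique_mincuts_def by simp
  qed
  hence "(THE F. is_min_cutset V E ends T c (T \<inter> C) F) = delta E ends C"
    using mc by (rule the1_equality)
  thus ?thesis unfolding E_S_def by simp
qed

end
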